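(* Let $T$ be a complete first-order theory, and let $T'$ be its continuous logic counterpart (i.e., $T$ and $T'$ have the same models, first-order formulas being regarded as $\{0,1\}$-valued continuous formulas). Let $\mathcal{I}$ be a structure in a first-order language $\mathcal{L}'$. Then $\mathcal{I}$-indexed indiscernibles have the continuous modeling property in $T'$ if and only if $\mathcal{I}$-indexed indiscernibles have the (classical) modeling property in $T$.
   Context: Let $\mathcal{L}'$ be a first-order language and $\mathcal{I}$ an $\mathcal{L}'$-structure. Work in a monster model $\mathfrak{C}$ (a $\kappa$-saturated, strongly $\kappa$-homogeneous model for a strong limit cardinal $\kappa > |T|$). An $\mathcal{I}$-indexed sequence $(b_i)_{i\in\mathcal{I}}$ is $\mathcal{I}$-indiscernible if for all finite tuples $\bar i,\bar j$ from $\mathcal{I}$, $\mathrm{qftp}(\bar i)=\mathrm{qftp}(\bar j)$ implies $\mathrm{tp}(b_{\bar i})=\mathrm{tp}(b_{\bar j})$. Given an $\mathcal{I}$-indexed sequence $\mathbf{I}=(a_i)_{i\in\mathcal{I}}$, a sequence $(b_j)_{j\in\mathcal{I}}$ is locally based on $\mathbf{I}$ in the continuous sense if for every finite set $\Delta$ of formulas, every finite tuple $\bar j\subseteq\mathcal{I}$ and every $\varepsilon>0$ there is $\bar i\subseteq\mathcal{I}$ with $\mathrm{qftp}(\bar i)=\mathrm{qftp}(\bar j)$ and $|\varphi(b_{\bar j})-\varphi(a_{\bar i})|\le\varepsilon$ for all $\varphi\in\Delta$; it is locally based on $\mathbf{I}$ in the classical sense if instead one requires $\mathrm{tp}^{\Delta}(b_{\bar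 j})=\mathrm{tp}^{\Delta}(a_{\bar i})$. $\mathcal{I}$-indexed indiscernibles have the continuous modeling property in a continuous theory if for every $\mathcal{I}$-indexed sequence $\mathbf{I}$ in the monster model there is an $\mathcal{I}$-indiscernible sequence locally based on $\mathbf{I}$ in the continuous sense; they have the (classical) modeling property in a first-order theory if the same holds with "locally based" in the classical sense. *)

theory Defs
  imports "HOL-Analysis.Analysis"
begin

text \<open>Languages are given by a type of function symbols (constants are 0-ary function
symbols) and a type of relation symbols; a structure interprets each symbol on argument
lists of every length (equivalently, a symbol of each arity).\<close>

datatype 'f trm = Var nat | Fn 'f "'f trm list"

datatype ('f, 'r) fm =
    FBot
  | FEq "'f trm" "'f trm"
  | FRel 'r "'f trm list"
  | FNeg "('f, 'r) fm"
  | FConj "('f, 'r) fm" "('f, 'r) fm"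
  | FEx nat "('f, 'r) fm"

record ('a, 'f, 'r) struc =
  sdom :: "'a set"
  sfun :: "'f \<Rightarrow> 'a list \<Rightarrow> 'a"
  srel :: "'r \<Rightarrow> 'a list \<Rightarrow> bool"

definition is_struc :: "('a, 'f, 'r) struc \<Rightarrow> bool" where
  "is_struc M \<longleftrightarrow> sdom M \<noteq> {} \<and>
     (\<forall>f as. set as \<subseteq> sdom M \<longrightarrow> sfun M f as \<in> sdom M)"

fun teval :: "('a, 'f, 'r) struc \<Rightarrow> (nat \<Rightarrow> 'a) \<Rightarrow> 'f trm \<Rightarrow> 'a" where
  "teval M s (Var n) = s n"
| "teval M s (Fn f ts) = sfun M f (map (teval M s) ts)"

fun sat :: "('a, 'f, 'r) struc \<Rightarrow> (nat \<Rightarrow> 'a) \<Rightarrow> ('f, 'r) fm \<Rightarrow> bool" where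
  "sat M s FBot = False"
| "sat M s (FEq t u) = (teval M s t = teval M s u)"
| "sat M s (FRel r ts) = srel M r (map (teval M s) ts)"
| "sat M s (FNeg \<phi>) = (\<not> sat M s \<phi>)"
| "sat M s (FConj \<phi> \<psi>) = (sat M s \<phi> \<and> sat M s \<psi>)"
| "sat M s (FEx x \<phi>) = (\<exists>a\<in>sdom M. sat M (s(x := a)) \<phi>)"

fun tvars :: "'f trm \<Rightarrow> nat set" where
  "tvars (Var n) = {n}"
| "tvars (Fn f ts) = (\<Union>t\<in>set ts. tvars t)"

fun fv :: "('f, 'r) fm \<Rightarrow> nat set" where
  "fv FBot = {}"
| "fv (FEq t u) = tvars t \<union> tvars u"
| "fv (FRel r ts) = (\<Union>t\<in>set ts. tvars t)"
| "fv (FNeg \<phi>) = fv \<phi>"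
| "fv (FConj \<phi> \<psi>) = fv \<phi> \<union> fv \<psi>"
| "fv (FEx x \<phi>) = fv \<phi> - {x}"

fun qfree :: "('f, 'r) fm \<Rightarrow> bool" where
  "qfree (FNeg \<phi>) = qfree \<phi>"
| "qfree (FConj \<phi> \<psi>) = (qfree \<phi> \<and> qfree \<psi>)"
| "qfree (FEx x \<phi>) = False"
| "qfree _ = True"

definition sentence :: "('f, 'r) fm \<Rightarrow> bool" where
  "sentence \<phi> \<longleftrightarrow> fv \<phi> = {}"

definition models :: "('a, 'f, 'r) struc \<Rightarrow> ('f, 'r) fm set \<Rightarrow> bool" where
  "models M T \<longleftrightarrow> is_struc M \<and> (\<forall>\<phi>\<in>T. \<forall>s. range s \<subseteq> sdom M \<longrightarrow> sat M s \<phi>)"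

text \<open>A complete theory: a consistent set of sentences deciding every sentence
(semantically, over structures with universe in the type \<open>'a\<close>).\<close>
definition complete_theory :: "'a itself \<Rightarrow> ('f, 'r) fm set \<Rightarrow> bool" where
  "complete_theory _ T \<longleftrightarrow> (\<forall>\<phi>\<in>T. sentence \<phi>) \<and>
     (\<exists>M :: ('a, 'f, 'r) struc. models M T) \<and>
     (\<forall>\<phi>. sentence \<phi> \<longrightarrow>
        (\<forall>M :: ('a, 'f, 'r) struc. models M T \<longrightarrow> (\<forall>s. range s \<subseteq> sdom M \<longrightarrow> sat M s \<phi>)) \<or>
        (\<forall>M :: ('a, 'f, 'r) struc. models M T \<longrightarrow> (\<forall>s. range s \<subseteq> sdom M \<longrightarrow> sat M s (FNeg \<phi>))))"

definition tup :: "('a, 'f, 'r) struc \<Rightarrow> 'a list \<Rightarrow> nat \<Rightarrow> 'a" where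
  "tup M xs n = (if n < length xs then xs ! n else (SOME a. a \<in> sdom M))"

definition partial_elementary :: "('a, 'f, 'r) struc \<Rightarrow> 'a set \<Rightarrow> ('a \<Rightarrow> 'a) \<Rightarrow> bool" where
  "partial_elementary M A f \<longleftrightarrow> A \<subseteq> sdom M \<and> f ` A \<subseteq> sdom M \<and>
     (\<forall>\<phi> s. range s \<subseteq> A \<longrightarrow> (sat M s \<phi> \<longleftrightarrow> sat M (f \<circ> s) \<phi>))"

definition automorphism :: "('a, 'f, 'r) struc \<Rightarrow> ('a \<Rightarrow> 'a) \<Rightarrow> bool" where
  "automorphism M g \<longleftrightarrow> bij_betw g (sdom M) (sdom M) \<and>
     (\<forall>f as. set as \<subseteq> sdom M \<longrightarrow> g (sfun M f as) = sfun M f (map g as)) \<and>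
     (\<forall>r as. set as \<subseteq> sdom M \<longrightarrow> (srel M r (map g as) \<longleftrightarrow> srel M r as))"

text \<open>A formula with parameters is a
pair \<open>(\<phi>, s)\<close> where \<open>s\<close> assigns the free variables other than \<open>x_0\<close> to elements of \<open>A\<close>.\<close>
definition saturated :: "('a, 'f, 'r) struc \<Rightarrow> 'k rel \<Rightarrow> bool" where
  "saturated M \<kappa> \<longleftrightarrow> (\<forall>A \<Sigma>. A \<subseteq> sdom M \<longrightarrow> (card_of A, \<kappa>) \<in> ordLess \<longrightarrow>
      \<Sigma> \<subseteq> {(\<phi>, s). \<forall>n\<in>fv \<phi> - {0}. s n \<in> A} \<longrightarrow>
      (\<forall>F \<subseteq> \<Sigma>. finite F \<longrightarrow> (\<exists>c\<in>sdom M. \<forall>(\<phi>, s)\<in>F. sat M (s(0 := c)) \<phi>)) \<longrightarrow>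
      (\<exists>c\<in>sdom M. \<forall>(\<phi>, s)\<in>\<Sigma>. sat M (s(0 := c)) \<phi>))"

definition strongly_homogeneous :: "('a, 'f, 'r) struc \<Rightarrow> 'k rel \<Rightarrow> bool" where
  "strongly_homogeneous M \<kappa> \<longleftrightarrow> (\<forall>A f. (card_of A, \<kappa>) \<in> ordLess \<longrightarrow> partial_elementary M A f \<longrightarrow>
      (\<exists>g. automorphism M g \<and> (\<forall>a\<in>A. g a = f a)))"

definition strong_limit :: "'k rel \<Rightarrow> bool" where
  "strong_limit \<kappa> \<longleftrightarrow> Card_order \<kappa> \<and> infinite (Field \<kappa>) \<and>
     (\<forall>A :: 'k set. (card_of A, \<kappa>) \<in> ordLess \<longrightarrow> (card_of (Pow A), \<kappa>) \<in> ordLess)"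

text \<open>\<open>|T|\<close> is taken to be \<open>|L| + \<aleph>\<^sub>0\<close>, the number of formulas.\<close>
definition monster_model :: "('a, 'f, 'r) struc \<Rightarrow> ('f, 'r) fm set \<Rightarrow> 'k rel \<Rightarrow> bool" where
  "monster_model M T \<kappa> \<longleftrightarrow> models M T \<and> strong_limit \<kappa> \<and>
     (card_of (UNIV :: ('f, 'r) fm set), \<kappa>) \<in> ordLess \<and>
     saturated M \<kappa> \<and> strongly_homogeneous M \<kappa>"

section \<open>Continuous formulas (continuous logic counterpart, {0,1}-valued, 0 = true)\<close>

datatype ('f, 'r) cfm =
    CEq "'f trm" "'f trm"
  | CRel 'r "'f trm list"
  | CConn "(nat \<Rightarrow> real) \<Rightarrow> real" "('f, 'r) cfm list"
  | CSup nat "('f, 'r) cfm"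
  | CInf nat "('f, 'r) cfm"

definition trunc :: "nat \<Rightarrow> (nat \<Rightarrow> real) \<Rightarrow> nat \<Rightarrow> real" where
  "trunc k x = (\<lambda>i. if i < k then x i else 0)"

text \<open>A \<open>k\<close>-ary connective: a continuous map \<open>[0,1]^k \<rightarrow> [0,1]\<close> (applied to the first \<open>k\<close> coordinates).\<close>
definition connective :: "nat \<Rightarrow> ((nat \<Rightarrow> real) \<Rightarrow> real) \<Rightarrow> bool" where
  "connective k u \<longleftrightarrow>
     (\<forall>x. (\<forall>i<k. x i \<in> {0..1}) \<longrightarrow> u (trunc k x) \<in> {0..1}) \<and>
     (\<forall>x. (\<forall>i<k. x i \<in> {0..1}) \<longrightarrow> (\<forall>e>0. \<exists>d>0. \<forall>y. (\<forall>i<k. y i \<in> {0..1}) \<longrightarrow>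
        (\<forall>i<k. \<bar>x i - y i\<bar> < d) \<longrightarrow> \<bar>u (trunc k x) - u (trunc k y)\<bar> < e))"

fun wf_cfm :: "('f, 'r) cfm \<Rightarrow> bool" where
  "wf_cfm (CEq t u) = True"
| "wf_cfm (CRel r ts) = True"
| "wf_cfm (CConn u ps) = (connective (length ps) u \<and> (\<forall>p\<in>set ps. wf_cfm p))"
| "wf_cfm (CSup x p) = wf_cfm p"
| "wf_cfm (CInf x p) = wf_cfm p"

fun cfv :: "('f, 'r) cfm \<Rightarrow> nat set" where
  "cfv (CEq t u) = tvars t \<union> tvars u"
| "cfv (CRel r ts) = (\<Union>t\<in>set ts. tvars t)"
| "cfv (CConn u ps) = (\<Union>p\<in>set ps. cfv p)"
| "cfv (CSup x p) = cfv p - {x}"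
| "cfv (CInf x p) = cfv p - {x}"

fun cval :: "('a, 'f, 'r) struc \<Rightarrow> (nat \<Rightarrow> 'a) \<Rightarrow> ('f, 'r) cfm \<Rightarrow> real" where
  "cval M s (CEq t u) = (if teval M s t = teval M s u then 0 else 1)"
| "cval M s (CRel r ts) = (if srel M r (map (teval M s) ts) then 0 else 1)"
| "cval M s (CConn u ps) =
     (let vs = map (cval M s) ps in u (\<lambda>i. if i < length vs then vs ! i else 0))"
| "cval M s (CSup x p) = (SUP a\<in>sdom M. cval M (s(x := a)) p)"
| "cval M s (CInf x p) = (INF a\<in>sdom M. cval M (s(x := a)) p)"

definition same_qftp :: "('i, 'g, 's) struc \<Rightarrow> 'i list \<Rightarrow> 'i list \<Rightarrow> bool" where
  "same_qftp I is js \<longleftrightarrow> length is = length js \<and>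
     (\<forall>\<phi>. qfree \<phi> \<and> fv \<phi> \<subseteq> {..<length is} \<longrightarrow> (sat I (tup I is) \<phi> \<longleftrightarrow> sat I (tup I js) \<phi>))"

definition same_tp :: "('a, 'f, 'r) struc \<Rightarrow> 'a list \<Rightarrow> 'a list \<Rightarrow> bool" where
  "same_tp M xs ys \<longleftrightarrow> length xs = length ys \<and>
     (\<forall>\<phi>. fv \<phi> \<subseteq> {..<length xs} \<longrightarrow> (sat M (tup M xs) \<phi> \<longleftrightarrow> sat M (tup M ys) \<phi>))"

definition same_ctp :: "('a, 'f, 'r) struc \<Rightarrow> 'a list \<Rightarrow> 'a list \<Rightarrow> bool" where
  "same_ctp M xs ys \<longleftrightarrow> length xs = length ys \<and>
     (\<forall>\<phi>. wf_cfm \<phi> \<and> cfv \<phi> \<subseteq> {..<length xs} \<longrightarrow> cval M (tup M xs) \<phi> = cval M (tup M ys) \<phi>)"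

text \<open>An \<open>I\<close>-indexed sequence of \<open>m\<close>-tuples; \<open>b_{\<bar>i\<bar>}\<close> is the concatenation.\<close>
definition indexed_seq :: "('a, 'f, 'r) struc \<Rightarrow> ('i, 'g, 's) struc \<Rightarrow> nat \<Rightarrow> ('i \<Rightarrow> 'a list) \<Rightarrow> bool" where
  "indexed_seq M I m a \<longleftrightarrow> (\<forall>i\<in>sdom I. length (a i) = m \<and> set (a i) \<subseteq> sdom M)"

definition sub :: "('i \<Rightarrow> 'a list) \<Rightarrow> 'i list \<Rightarrow> 'a list" where
  "sub a is = concat (map a is)"

definition indiscernible :: "('a, 'f, 'r) struc \<Rightarrow> ('i, 'g, 's) struc \<Rightarrow> ('i \<Rightarrow> 'a list) \<Rightarrow> bool" where
  "indiscernible M I b \<longleftrightarrow> (\<forall>is js. set is \<subseteq> sdom I \<and> set js \<subseteq> sdom I \<and> same_qftp I is js \<longrightarrow>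
      same_tp M (sub b is) (sub b js))"

definition cindiscernible :: "('a, 'f, 'r) struc \<Rightarrow> ('i, 'g, 's) struc \<Rightarrow> ('i \<Rightarrow> 'a list) \<Rightarrow> bool" where
  "cindiscernible M I b \<longleftrightarrow> (\<forall>is js. set is \<subseteq> sdom I \<and> set js \<subseteq> sdom I \<and> same_qftp I is js \<longrightarrow>
      same_ctp M (sub b is) (sub b js))"

definition locally_based :: "('a, 'f, 'r) struc \<Rightarrow> ('i, 'g, 's) struc \<Rightarrow> ('i \<Rightarrow> 'a list) \<Rightarrow> ('i \<Rightarrow> 'a list) \<Rightarrow> bool" where
  "locally_based M I b a \<longleftrightarrow> (\<forall>\<Delta> js. finite \<Delta> \<and> set js \<subseteq> sdom I \<longrightarrow>
     (\<exists>is. set is \<subseteq> sdom I \<and> same_qftp I is js \<and>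
        (\<forall>\<phi>\<in>\<Delta>. fv \<phi> \<subseteq> {..<length (sub b js)} \<longrightarrow>
           (sat M (tup M (sub b js)) \<phi> \<longleftrightarrow> sat M (tup M (sub a is)) \<phi>))))"

definition clocally_based :: "('a, 'f, 'r) struc \<Rightarrow> ('i, 'g, 's) struc \<Rightarrow> ('i \<Rightarrow> 'a list) \<Rightarrow> ('i \<Rightarrow> 'a list) \<Rightarrow> bool" where
  "clocally_based M I b a \<longleftrightarrow> (\<forall>\<Delta> js (e::real). finite \<Delta> \<and> (\<forall>\<phi>\<in>\<Delta>. wf_cfm \<phi>) \<and> set js \<subseteq> sdom I \<and> e > 0 \<longrightarrow>
     (\<exists>is. set is \<subseteq> sdom I \<and> same_qftp I is js \<and>
        (\<forall>\<phi>\<in>\<Delta>. cfv \<phi> \<subseteq> {..<length (sub b js)} \<longrightarrow>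
           \<bar>cval M (tup M (sub b js)) \<phi> - cval M (tup M (sub a is)) \<phi>\<bar> \<le> e)))"

definition modeling_property :: "('a, 'f, 'r) struc \<Rightarrow> ('i, 'g, 's) struc \<Rightarrow> bool" where
  "modeling_property M I \<longleftrightarrow> (\<forall>m a. indexed_seq M I m a \<longrightarrow>
     (\<exists>b. indexed_seq M I m b \<and> indiscernible M I b \<and> locally_based M I b a))"

definition cont_modeling_property :: "('a, 'f, 'r) struc \<Rightarrow> ('i, 'g, 's) struc \<Rightarrow> bool" where
  "cont_modeling_property M I \<longleftrightarrow> (\<forall>m a. indexed_seq M I m a \<longrightarrow>
     (\<exists>b. indexed_seq M I m b \<and> cindiscernible M I b \<and> clocally_based M I b a))"

end

theory Submission
  imports Defs
begin

fun tr :: "('f, 'r) fm \<Rightarrow> ('f, 'r) cfm" where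
  "tr FBot = CConn (\<lambda>x. 1) []"
| "tr (FEq t u) = CEq t u"
| "tr (FRel r ts) = CRel r ts"
| "tr (FNeg \<phi>) = CConn (\<lambda>x. 1 - x 0) [tr \<phi>]"
| "tr (FConj \<phi> \<psi>) = CConn (\<lambda>x. max (x 0) (x 1)) [tr \<phi>, tr \<psi>]"
| "tr (FEx x \<phi>) = CInf x (tr \<phi>)"

lemma cfv_tr: "cfv (tr \<phi>) = fv \<phi>"
  by (induction \<phi>) auto

lemma max_diff: "\<bar>max (a::real) b - max c d\<bar> \<le> max \<bar>a - c\<bar> \<bar>b - d\<bar>"
  by (auto simp: max_def abs_if)

lemma wf_tr: "wf_cfm (tr \<phi>)"
proof (induction \<phi>)
  case (FNeg \<phi>)
  have "connective 1 (\<lambda>x. 1 - x 0)"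
    unfolding connective_def trunc_def
  proof (intro conjI allI impI)
    fix x :: "nat \<Rightarrow> real" and e :: real assume "e > 0"
    show "\<exists>d>0. \<forall>y. (\<forall>i<1. y i \<in> {0..1}) \<longrightarrow> (\<forall>i<1. \<bar>x i - y i\<bar> < d) \<longrightarrow>
       \<bar>1 - (\<lambda>i. if i < 1 then x i else 0) 0 - (1 - (\<lambda>i. if i < 1 then y i else 0) 0)\<bar> < e"
    proof (intro exI[of _ e] conjI allI impI)
      fix y :: "nat \<Rightarrow> real" assume "\<forall>i<1. \<bar>x i - y i\<bar> < e"
      then have "\<bar>x 0 - y 0\<bar> < e" by simp
      then show "\<bar>1 - (\<lambda>i. if i < 1 then x i else 0) 0 - (1 - (\<lambda>i. if i < 1 then y i else 0) 0)\<bar> < e"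
        by simp
    qed (use \<open>e > 0\<close> in simp)
  qed auto
  then show ?case using FNeg by simp
next
  case (FConj \<phi> \<psi>)
  have "connective 2 (\<lambda>x. max (x 0) (x 1))"
    unfolding connective_def trunc_def
  proof (intro conjI allI impI)
    fix x :: "nat \<Rightarrow> real" assume "\<forall>i<2. x i \<in> {0..1}"
    then have "x 0 \<in> {0..1}" "x 1 \<in> {0..1}" by auto
    then show "max ((\<lambda>i. if i < 2 then x i else 0) 0) ((\<lambda>i. if i < 2 then x i else 0) 1) \<in> {0..1}"
      by auto
  next
    fix x :: "nat \<Rightarrow> real" and e :: real assume "e > 0"
    show "\<exists>d>0. \<forall>y. (\<forall>i<2. y i \<in> {0..1}) \<longrightarrow> (\<forall>i<2. \<bar>x i - y i\<bar> < d) \<longrightarrow>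
       \<bar>max ((\<lambda>i. if i < 2 then x i else 0) 0) ((\<lambda>i. if i < 2 then x i else 0) 1) -
        max ((\<lambda>i. if i < 2 then y i else 0) 0) ((\<lambda>i. if i < 2 then y i else 0) 1)\<bar> < e"
    proof (intro exI[of _ e] conjI allI impI)
      fix y :: "nat \<Rightarrow> real" assume "\<forall>i<2. \<bar>x i - y i\<bar> < e"
      then have "\<bar>x 0 - y 0\<bar> < e" "\<bar>x 1 - y 1\<bar> < e" by auto
      moreover have "\<bar>max (x 0) (x 1) - max (y 0) (y 1)\<bar> \<le> max \<bar>x 0 - y 0\<bar> \<bar>x 1 - y 1\<bar>"
        by (rule max_diff)
      ultimately have "\<bar>max (x 0) (x 1) - max (y 0) (y 1)\<bar> < e" by linarith
      then show "\<bar>max ((\<lambda>i. if i < 2 then x i else 0) 0) ((\<lambda>i. if i < 2 then x i else 0) 1) -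
        max ((\<lambda>i. if i < 2 then y i else 0) 0) ((\<lambda>i. if i < 2 then y i else 0) 1)\<bar> < e"
        by simp
    qed (use \<open>e > 0\<close> in simp)
  qed
  then show ?case using FConj by (simp add: numeral_2_eq_2)
qed (auto simp: connective_def trunc_def)

lemma upd_range: "range s \<subseteq> D \<Longrightarrow> a \<in> D \<Longrightarrow> range (s(x := a)) \<subseteq> D"
  by auto

lemma inf01:
  assumes "A \<noteq> {}" "\<forall>a\<in>A. f a = (0::real) \<or> f a = 1"
  shows "(INF a\<in>A. f a) = (if \<exists>a\<in>A. f a = 0 then 0 else 1)"
proof (cases "\<exists>a\<in>A. f a = 0")
  case True
  then show ?thesis using assms
    by (auto intro!: cInf_eq_minimum)
next
  case False
  then have "f ` A = {1}" using assms by auto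
  then show ?thesis using False by simp
qed

lemma cval_tr:
  assumes "sdom M \<noteq> {}" "range s \<subseteq> sdom M"
  shows "cval M s (tr \<phi>) = (if sat M s \<phi> then 0 else 1)"
  using assms(2)
proof (induction \<phi> arbitrary: s)
  case (FEx x \<phi>)
  have h: "cval M (s(x := a)) (tr \<phi>) = (if sat M (s(x := a)) \<phi> then 0 else 1)"
    if a: "a \<in> sdom M" for a
    by (rule FEx.IH) (rule upd_range[OF FEx.prems a])
  have "cval M s (tr (FEx x \<phi>)) = (INF a\<in>sdom M. (if sat M (s(x := a)) \<phi> then 0 else 1))"
    using h by simp
  also have "\<dots> = (if \<exists>a\<in>sdom M. (if sat M (s(x := a)) \<phi> then 0 else 1) = (0::real) then 0 else 1)"
    by (rule inf01) (use assms(1) in auto)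
  also have "\<dots> = (if sat M s (FEx x \<phi>) then 0 else 1)"
    by simp
  finally show ?case .
qed (auto simp: max_def)

section \<open>Definability of level sets of continuous formulas\<close>

definition FOr where "FOr a b = FNeg (FConj (FNeg a) (FNeg b))"
definition FAll where "FAll x a = FNeg (FEx x (FNeg a))"

definition bigconj :: "('f, 'r) fm list \<Rightarrow> ('f, 'r) fm" where
  "bigconj l = foldr FConj l (FNeg FBot)"
definition bigdisj :: "('f, 'r) fm list \<Rightarrow> ('f, 'r) fm" where
  "bigdisj l = foldr FOr l FBot"

lemma sat_bigconj: "sat M s (bigconj l) \<longleftrightarrow> (\<forall>\<phi>\<in>set l. sat M s \<phi>)"
  unfolding bigconj_def by (induction l) auto
lemma sat_bigdisj: "sat M s (bigdisj l) \<longleftrightarrow> (\<exists>\<phi>\<in>set l. sat M s \<phi>)"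
  unfolding bigdisj_def by (induction l) (auto simp: FOr_def)
lemma fv_bigconj: "fv (bigconj l) = (\<Union>\<phi>\<in>set l. fv \<phi>)"
  unfolding bigconj_def by (induction l) auto
lemma fv_bigdisj: "fv (bigdisj l) = (\<Union>\<phi>\<in>set l. fv \<phi>)"
  unfolding bigdisj_def by (induction l) (auto simp: FOr_def)

definition disjset :: "('f, 'r) fm set \<Rightarrow> ('f, 'r) fm" where
  "disjset S = bigdisj (SOME l. set l = S)"

lemma disjset:
  assumes "finite S"
  shows "sat M s (disjset S) \<longleftrightarrow> (\<exists>\<phi>\<in>S. sat M s \<phi>)" "fv (disjset S) = (\<Union>\<phi>\<in>S. fv \<phi>)"
proof -
  have "set (SOME l. set l = S) = S" using someI_ex[OF finite_list[OF assms]] .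
  then show "sat M s (disjset S) \<longleftrightarrow> (\<exists>\<phi>\<in>S. sat M s \<phi>)" "fv (disjset S) = (\<Union>\<phi>\<in>S. fv \<phi>)"
    unfolding disjset_def by (auto simp: sat_bigdisj fv_bigdisj)
qed

definition good :: "('a, 'f, 'r) struc \<Rightarrow> ('f, 'r) cfm \<Rightarrow> real set \<Rightarrow> (real \<Rightarrow> ('f, 'r) fm) \<Rightarrow> bool" where
  "good M p V \<psi> \<longleftrightarrow> finite V \<and> (\<forall>s. range s \<subseteq> sdom M \<longrightarrow> cval M s p \<in> V) \<and>
     (\<forall>v. fv (\<psi> v) \<subseteq> cfv p \<and> (\<forall>s. range s \<subseteq> sdom M \<longrightarrow> (sat M s (\<psi> v) \<longleftrightarrow> cval M s p = v)))"


lemma sup_level: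
  fixes f :: "'a \<Rightarrow> real"
  assumes "A \<noteq> {}" "finite V" "\<forall>a\<in>A. f a \<in> V"
  shows "(SUP a\<in>A. f a) = v \<longleftrightarrow> (\<exists>a\<in>A. f a = v) \<and> (\<forall>a\<in>A. f a \<le> v)"
proof -
  have fin: "finite (f ` A)" using assms by (metis finite_subset image_subset_iff)
  have ne: "f ` A \<noteq> {}" using assms by auto
  have "Sup (f ` A) = Max (f ` A)" using fin ne by (rule cSup_eq_Max)
  moreover have "Max (f ` A) \<in> f ` A" using fin ne by simp
  moreover have "\<forall>a\<in>A. f a \<le> Max (f ` A)" using fin by simp
  ultimately show ?thesis
    by (smt (verit, best) imageE)
qed

lemma inf_level:
  fixes f :: "'a \<Rightarrow> real"
  assumes "A \<noteq> {}" "finite V" "\<forall>a\<in>A. f a \<in> V"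
  shows "(INF a\<in>A. f a) = v \<longleftrightarrow> (\<exists>a\<in>A. f a = v) \<and> (\<forall>a\<in>A. v \<le> f a)"
proof -
  have fin: "finite (f ` A)" using assms by (metis finite_subset image_subset_iff)
  have ne: "f ` A \<noteq> {}" using assms by auto
  have "Inf (f ` A) = Min (f ` A)" using fin ne by (rule cInf_eq_Min)
  moreover have "Min (f ` A) \<in> f ` A" using fin ne by simp
  moreover have "\<forall>a\<in>A. Min (f ` A) \<le> f a" using fin by simp
  ultimately show ?thesis
    by (smt (verit, best) imageE)
qed

lemma good_exists:
  assumes ne: "sdom M \<noteq> {}"
  shows "wf_cfm p \<Longrightarrow> \<exists>V \<psi>. good M p V \<psi>"
proof (induction p)
  case (CEq t u)
  let ?\<psi> = "\<lambda>v::real. if v = 0 then FEq t u else if v = 1 then FNeg (FEq t u) else FBot"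
  have "good M (CEq t u) {0,1} ?\<psi>" unfolding good_def by auto
  then show ?case by blast
next
  case (CRel r ts)
  let ?\<psi> = "\<lambda>v::real. if v = 0 then FRel r ts else if v = 1 then FNeg (FRel r ts) else FBot"
  have "good M (CRel r ts) {0,1} ?\<psi>" unfolding good_def by auto
  then show ?case by blast
next
  case (CSup x p)
  then obtain V \<psi> where g: "good M p V \<psi>" by auto
  define Xf where "Xf v = FConj (FEx x (\<psi> v)) (FAll x (FNeg (disjset (\<psi> ` {w\<in>V. w > v}))))" for v
  have fV: "finite V" using g good_def by blast
  have "good M (CSup x p) V Xf"
    unfolding good_def
  proof (intro conjI allI impI)
    show "finite V" by fact
  next
    fix s :: "nat \<Rightarrow> 'a" assume s: "range s \<subseteq> sdom M"
    have "\<forall>a\<in>sdom M. cval M (s(x := a)) p \<in> V" using g s unfolding good_def by (auto dest: upd_range)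
    then have "cval M s (CSup x p) = (SUP a\<in>sdom M. cval M (s(x := a)) p)" by simp
    then have "\<exists>a\<in>sdom M. cval M (s(x := a)) p = cval M s (CSup x p)"
      using sup_level[OF ne fV \<open>\<forall>a\<in>sdom M. cval M (s(x := a)) p \<in> V\<close>, of "cval M s (CSup x p)"]
      by simp
    then show "cval M s (CSup x p) \<in> V"
      using \<open>\<forall>a\<in>sdom M. cval M (s(x := a)) p \<in> V\<close> by metis
  next
    fix v
    show "fv (Xf v) \<subseteq> cfv (CSup x p)"
      using g fV unfolding good_def Xf_def FAll_def by (auto simp: disjset)
  next
    fix v and s :: "nat \<Rightarrow> 'a" assume s: "range s \<subseteq> sdom M"
    have inV: "\<forall>a\<in>sdom M. cval M (s(x := a)) p \<in> V" using g s unfolding good_def by (auto dest: upd_range)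
    have eq: "\<And>a w. a \<in> sdom M \<Longrightarrow> sat M (s(x := a)) (\<psi> w) \<longleftrightarrow> cval M (s(x := a)) p = w"
    proof -
      fix a w assume "a \<in> sdom M"
      then have "range (s(x := a)) \<subseteq> sdom M" using s by (rule upd_range[rotated])
      then show "sat M (s(x := a)) (\<psi> w) \<longleftrightarrow> cval M (s(x := a)) p = w" using g unfolding good_def by blast
    qed
    have fin: "finite (\<psi> ` {w\<in>V. w > v})" using fV by simp
    have "sat M s (Xf v) \<longleftrightarrow> (\<exists>a\<in>sdom M. cval M (s(x := a)) p = v) \<and>
        (\<forall>a\<in>sdom M. \<not> (\<exists>w\<in>V. w > v \<and> cval M (s(x := a)) p = w))"
      unfolding Xf_def FAll_def using eq by (auto simp: disjset[OF fin])
    also have "\<dots> \<longleftrightarrow> (\<exists>a\<in>sdom M. cval M (s(x := a)) p = v) \<and> (\<forall>a\<in>sdom M. cval M (s(x := a)) p \<le> v)"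
      using inV by force
    also have "\<dots> \<longleftrightarrow> cval M s (CSup x p) = v"
      using sup_level[OF ne fV inV] by simp
    finally show "sat M s (Xf v) \<longleftrightarrow> cval M s (CSup x p) = v" .
  qed
  then show ?case by blast
next
  case (CInf x p)
  then obtain V \<psi> where g: "good M p V \<psi>" by auto
  define Xf where "Xf v = FConj (FEx x (\<psi> v)) (FAll x (FNeg (disjset (\<psi> ` {w\<in>V. w < v}))))" for v
  have fV: "finite V" using g good_def by blast
  have "good M (CInf x p) V Xf"
    unfolding good_def
  proof (intro conjI allI impI)
    show "finite V" by fact
  next
    fix s :: "nat \<Rightarrow> 'a" assume s: "range s \<subseteq> sdom M"
    have "\<forall>a\<in>sdom M. cval M (s(x := a)) p \<in> V" using g s unfolding good_def by (auto dest: upd_range)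
    then have "cval M s (CInf x p) = (INF a\<in>sdom M. cval M (s(x := a)) p)" by simp
    then have "\<exists>a\<in>sdom M. cval M (s(x := a)) p = cval M s (CInf x p)"
      using inf_level[OF ne fV \<open>\<forall>a\<in>sdom M. cval M (s(x := a)) p \<in> V\<close>, of "cval M s (CInf x p)"]
      by simp
    then show "cval M s (CInf x p) \<in> V"
      using \<open>\<forall>a\<in>sdom M. cval M (s(x := a)) p \<in> V\<close> by metis
  next
    fix v
    show "fv (Xf v) \<subseteq> cfv (CInf x p)"
      using g fV unfolding good_def Xf_def FAll_def by (auto simp: disjset)
  next
    fix v and s :: "nat \<Rightarrow> 'a" assume s: "range s \<subseteq> sdom M"
    have inV: "\<forall>a\<in>sdom M. cval M (s(x := a)) p \<in> V" using g s unfolding good_def by (auto dest: upd_range)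
    have eq: "\<And>a w. a \<in> sdom M \<Longrightarrow> sat M (s(x := a)) (\<psi> w) \<longleftrightarrow> cval M (s(x := a)) p = w"
    proof -
      fix a w assume "a \<in> sdom M"
      then have "range (s(x := a)) \<subseteq> sdom M" using s by (rule upd_range[rotated])
      then show "sat M (s(x := a)) (\<psi> w) \<longleftrightarrow> cval M (s(x := a)) p = w" using g unfolding good_def by blast
    qed
    have fin: "finite (\<psi> ` {w\<in>V. w < v})" using fV by simp
    have "sat M s (Xf v) \<longleftrightarrow> (\<exists>a\<in>sdom M. cval M (s(x := a)) p = v) \<and>
        (\<forall>a\<in>sdom M. \<not> (\<exists>w\<in>V. w < v \<and> cval M (s(x := a)) p = w))"
      unfolding Xf_def FAll_def using eq by (auto simp: disjset[OF fin])
    also have "\<dots> \<longleftrightarrow> (\<exists>a\<in>sdom M. cval M (s(x := a)) p = v) \<and> (\<forall>a\<in>sdom M. v \<le> cval M (s(x := a)) p)"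
      using inV by force
    also have "\<dots> \<longleftrightarrow> cval M s (CInf x p) = v"
      using inf_level[OF ne fV inV] by simp
    finally show "sat M s (Xf v) \<longleftrightarrow> cval M s (CInf x p) = v" .
  qed
  then show ?case by blast
next
  case (CConn u ps)
  then have "\<forall>p\<in>set ps. \<exists>V \<psi>. good M p V \<psi>" by auto
  then obtain Vf \<psi>f where g: "\<And>p. p \<in> set ps \<Longrightarrow> good M p (Vf p) (\<psi>f p)" by metis
  define W where "W = (\<Union>p\<in>set ps. Vf p)"
  have fW: "finite W" using g unfolding W_def good_def by auto
  define n where "n = length ps"
  define Fin where "Fin = {vs. set vs \<subseteq> W \<and> length vs = n}"
  have fFin: "finite Fin" unfolding Fin_def using finite_lists_length_eq[OF fW] by simp
  define U where "U vs = u (\<lambda>i. if i < length vs then vs ! i else 0)" for vs :: "real list"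
  define conjof where "conjof vs = bigconj (map (\<lambda>i. \<psi>f (ps ! i) (vs ! i)) [0..<n])" for vs
  define Xf where "Xf v = disjset (conjof ` {vs\<in>Fin. U vs = v})" for v
  have cv: "cval M s (CConn u ps) = U (map (cval M s) ps)" for s
    by (simp add: U_def Let_def)
  have mapin: "map (cval M s) ps \<in> Fin" if s: "range s \<subseteq> sdom M" for s
  proof -
    have "cval M s p \<in> Vf p" if "p \<in> set ps" for p
      using g[OF that] s unfolding good_def by blast
    then have "set (map (cval M s) ps) \<subseteq> W" unfolding W_def by auto
    then show ?thesis unfolding Fin_def n_def by simp
  qed
  have "good M (CConn u ps) (U ` Fin) Xf"
    unfolding good_def
  proof (intro conjI allI impI)
    show "finite (U ` Fin)" using fFin by simp
  next
    fix s :: "nat \<Rightarrow> 'a" assume s: "range s \<subseteq> sdom M"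
    show "cval M s (CConn u ps) \<in> U ` Fin" using cv mapin[OF s] by simp
  next
    fix v
    have fin: "finite (conjof ` {vs\<in>Fin. U vs = v})" using fFin by simp
    have "fv (conjof vs) \<subseteq> cfv (CConn u ps)" for vs
    proof -
      have "fv (\<psi>f (ps ! i) (vs ! i)) \<subseteq> cfv (CConn u ps)" if "i < n" for i
      proof -
        have pi: "ps ! i \<in> set ps" using that unfolding n_def by simp
        then have "fv (\<psi>f (ps ! i) (vs ! i)) \<subseteq> cfv (ps ! i)" using g[OF pi] unfolding good_def by blast
        moreover have "cfv (ps ! i) \<subseteq> cfv (CConn u ps)"
          unfolding cfv.simps by (rule UN_upper[OF pi])
        ultimately show ?thesis by (rule order_trans)
      qed
      then show ?thesis unfolding conjof_def fv_bigconj by (simp del: cfv.simps add: UN_subset_iff)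
    qed
    moreover have "fv (Xf v) = (\<Union>\<phi>\<in>conjof ` {vs\<in>Fin. U vs = v}. fv \<phi>)"
      unfolding Xf_def by (rule disjset(2)[OF fin])
    ultimately show "fv (Xf v) \<subseteq> cfv (CConn u ps)" by (simp add: UN_subset_iff)
  next
    fix v and s :: "nat \<Rightarrow> 'a" assume s: "range s \<subseteq> sdom M"
    have sc: "sat M s (conjof vs) \<longleftrightarrow> vs = map (cval M s) ps" if "vs \<in> Fin" for vs
    proof -
      have "sat M s (conjof vs) \<longleftrightarrow> (\<forall>i<n. cval M s (ps ! i) = vs ! i)"
      proof -
        have "sat M s (\<psi>f (ps ! i) (vs ! i)) \<longleftrightarrow> cval M s (ps ! i) = vs ! i" if "i < n" for i
        proof -
          have pi: "ps ! i \<in> set ps" using that unfolding n_def by simp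
          show ?thesis using g[OF pi] s unfolding good_def by blast
        qed
        then show ?thesis unfolding conjof_def sat_bigconj by auto
      qed
      also have "\<dots> \<longleftrightarrow> vs = map (cval M s) ps"
        using that unfolding Fin_def n_def by (auto simp: list_eq_iff_nth_eq)
      finally show ?thesis .
    qed
    have fin: "finite (conjof ` {vs\<in>Fin. U vs = v})" using fFin by simp
    have "sat M s (Xf v) \<longleftrightarrow> (\<exists>\<phi>\<in>conjof ` {vs\<in>Fin. U vs = v}. sat M s \<phi>)"
      unfolding Xf_def by (rule disjset(1)[OF fin])
    also have "\<dots> \<longleftrightarrow> (\<exists>vs\<in>Fin. U vs = v \<and> sat M s (conjof vs))"
      by blast
    also have "\<dots> \<longleftrightarrow> U (map (cval M s) ps) = v"
    proof
      assume "\<exists>vs\<in>Fin. U vs = v \<and> sat M s (conjof vs)"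
      then obtain vs where "vs \<in> Fin" "U vs = v" "sat M s (conjof vs)" by blast
      then show "U (map (cval M s) ps) = v" using sc by simp
    next
      assume "U (map (cval M s) ps) = v"
      then show "\<exists>vs\<in>Fin. U vs = v \<and> sat M s (conjof vs)"
        using sc[OF mapin[OF s]] mapin[OF s] by blast
    qed
    finally show "sat M s (Xf v) \<longleftrightarrow> cval M s (CConn u ps) = v" using cv by simp
  qed
  then show ?case by blast
qed


lemma tup_range: "set xs \<subseteq> sdom M \<Longrightarrow> sdom M \<noteq> {} \<Longrightarrow> range (tup M xs) \<subseteq> sdom M"
  unfolding tup_def by (auto intro: someI_ex)

lemma sub_set: "indexed_seq M I m a \<Longrightarrow> set is \<subseteq> sdom I \<Longrightarrow> set (sub a is) \<subseteq> sdom M"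
  unfolding indexed_seq_def sub_def by auto

lemma same_tp_ctp:
  fixes M :: "('a, 'f, 'r) struc"
  assumes ne: "sdom M \<noteq> {}" and G: "\<And>p. wf_cfm p \<Longrightarrow> good M p (fst (G p)) (snd (G p))"
    and xs: "set xs \<subseteq> sdom M" and ys: "set ys \<subseteq> sdom M" and tp: "same_tp M xs ys"
  shows "same_ctp M xs ys"
  unfolding same_ctp_def
proof (intro conjI allI impI)
  show "length xs = length ys" using tp same_tp_def by blast
next
  fix \<phi> :: "('f, 'r) cfm" assume h: "wf_cfm \<phi> \<and> cfv \<phi> \<subseteq> {..<length xs}"
  define v where "v = cval M (tup M xs) \<phi>"
  have g: "good M \<phi> (fst (G \<phi>)) (snd (G \<phi>))" using G h by blast
  have rx: "range (tup M xs) \<subseteq> sdom M" by (rule tup_range[OF xs ne])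
  have ry: "range (tup M ys) \<subseteq> sdom M" by (rule tup_range[OF ys ne])
  have fvs: "fv (snd (G \<phi>) v) \<subseteq> {..<length xs}" using g h unfolding good_def by blast
  have "sat M (tup M xs) (snd (G \<phi>) v)" using g rx unfolding good_def v_def by blast
  then have "sat M (tup M ys) (snd (G \<phi>) v)" using tp fvs unfolding same_tp_def by blast
  then have "cval M (tup M ys) \<phi> = v" using g ry unfolding good_def by blast
  then show "cval M (tup M xs) \<phi> = cval M (tup M ys) \<phi>" unfolding v_def by simp
qed

lemma same_ctp_tp:
  fixes M :: "('a, 'f, 'r) struc"
  assumes ne: "sdom M \<noteq> {}"
    and xs: "set xs \<subseteq> sdom M" and ys: "set ys \<subseteq> sdom M" and ctp: "same_ctp M xs ys"
  shows "same_tp M xs ys"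
  unfolding same_tp_def
proof (intro conjI allI impI)
  show "length xs = length ys" using ctp same_ctp_def by blast
next
  fix \<phi> :: "('f, 'r) fm" assume h: "fv \<phi> \<subseteq> {..<length xs}"
  have rx: "range (tup M xs) \<subseteq> sdom M" by (rule tup_range[OF xs ne])
  have ry: "range (tup M ys) \<subseteq> sdom M" by (rule tup_range[OF ys ne])
  have "cval M (tup M xs) (tr \<phi>) = cval M (tup M ys) (tr \<phi>)"
    using ctp h wf_tr[of \<phi>] cfv_tr[of \<phi>] unfolding same_ctp_def by simp
  then show "sat M (tup M xs) \<phi> \<longleftrightarrow> sat M (tup M ys) \<phi>"
    using cval_tr[OF ne rx, of \<phi>] cval_tr[OF ne ry, of \<phi>] by (simp split: if_splits)
qed

theorem proposition3p5:
  fixes T :: "('f, 'r) fm set" and C :: "('a, 'f, 'r) struc" and \<kappa> :: "'k rel"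
    and I :: "('i, 'g, 's) struc"
  assumes "complete_theory TYPE('a) T"
    and "monster_model C T \<kappa>"
    and "is_struc I"
  shows "cont_modeling_property C I \<longleftrightarrow> modeling_property C I"
proof -
  have ne: "sdom C \<noteq> {}"
    using assms(2) unfolding monster_model_def models_def is_struc_def by blast
  have "\<forall>p. \<exists>G. wf_cfm p \<longrightarrow> good C p (fst G) (snd G)"
    using good_exists[OF ne] by fastforce
  then obtain G where G0: "\<forall>p. wf_cfm p \<longrightarrow> good C p (fst (G p)) (snd (G p))"
    using choice[of "\<lambda>p G. wf_cfm p \<longrightarrow> good C p (fst G) (snd G)"] by blast
  then have G: "\<And>p. wf_cfm p \<Longrightarrow> good C p (fst (G p)) (snd (G p))" by blast
  show ?thesis
  proof
    assume cmp: "cont_modeling_property C I"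
    show "modeling_property C I"
      unfolding modeling_property_def
    proof (intro allI impI)
      fix m a assume a: "indexed_seq C I m a"
      obtain b where b: "indexed_seq C I m b" "cindiscernible C I b" "clocally_based C I b a"
        using cmp a unfolding cont_modeling_property_def by blast
      have "indiscernible C I b"
        unfolding indiscernible_def
      proof (intro allI impI)
        fix "is" js assume h: "set is \<subseteq> sdom I \<and> set js \<subseteq> sdom I \<and> same_qftp I is js"
        then have "same_ctp C (sub b is) (sub b js)" using b(2) unfolding cindiscernible_def by blast
        then show "same_tp C (sub b is) (sub b js)"
          using same_ctp_tp[OF ne] sub_set[OF b(1)] h by blast
      qed
      moreover have "locally_based C I b a"
        unfolding locally_based_def
      proof (intro allI impI)
        fix \<Delta> :: "('f, 'r) fm set" and js assume h: "finite \<Delta> \<and> set js \<subseteq> sdom I"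
        have "\<exists>is. set is \<subseteq> sdom I \<and> same_qftp I is js \<and>
          (\<forall>\<phi>\<in>tr ` \<Delta>. cfv \<phi> \<subseteq> {..<length (sub b js)} \<longrightarrow>
           \<bar>cval C (tup C (sub b js)) \<phi> - cval C (tup C (sub a is)) \<phi>\<bar> \<le> 1/2)"
        proof -
          have "finite (tr ` \<Delta>) \<and> (\<forall>\<phi>\<in>tr ` \<Delta>. wf_cfm \<phi>) \<and> set js \<subseteq> sdom I \<and> (1/2::real) > 0"
            using h wf_tr by auto
          then show ?thesis using b(3) unfolding clocally_based_def by blast
        qed
        then obtain "is" where isP: "set is \<subseteq> sdom I" "same_qftp I is js"
          "\<forall>\<phi>\<in>tr ` \<Delta>. cfv \<phi> \<subseteq> {..<length (sub b js)} \<longrightarrow>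
           \<bar>cval C (tup C (sub b js)) \<phi> - cval C (tup C (sub a is)) \<phi>\<bar> \<le> 1/2" by blast
        have rb: "range (tup C (sub b js)) \<subseteq> sdom C"
          using tup_range[OF sub_set[OF b(1)] ne] h by blast
        have ra: "range (tup C (sub a is)) \<subseteq> sdom C"
          using tup_range[OF sub_set[OF a isP(1)] ne] .
        show "\<exists>is. set is \<subseteq> sdom I \<and> same_qftp I is js \<and>
          (\<forall>\<phi>\<in>\<Delta>. fv \<phi> \<subseteq> {..<length (sub b js)} \<longrightarrow>
             sat C (tup C (sub b js)) \<phi> = sat C (tup C (sub a is)) \<phi>)"
        proof (intro exI conjI ballI impI)
          fix \<phi> assume "\<phi> \<in> \<Delta>" "fv \<phi> \<subseteq> {..<length (sub b js)}"
          then have "\<bar>cval C (tup C (sub b js)) (tr \<phi>) - cval C (tup C (sub a is)) (tr \<phi>)\<bar> \<le> 1/2"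
            using isP(3) cfv_tr[of \<phi>] by auto
          then show "sat C (tup C (sub b js)) \<phi> = sat C (tup C (sub a is)) \<phi>"
            using cval_tr[OF ne rb, of \<phi>] cval_tr[OF ne ra, of \<phi>] by (simp split: if_splits)
        qed (use isP in auto)
      qed
      ultimately show "\<exists>b. indexed_seq C I m b \<and> indiscernible C I b \<and> locally_based C I b a"
        using b(1) by blast
    qed
  next
    assume mp: "modeling_property C I"
    show "cont_modeling_property C I"
      unfolding cont_modeling_property_def
    proof (intro allI impI)
      fix m a assume a: "indexed_seq C I m a"
      obtain b where b: "indexed_seq C I m b" "indiscernible C I b" "locally_based C I b a"
        using mp a unfolding modeling_property_def by blast
      have "cindiscernible C I b"
        unfolding cindiscernible_def
      proof (intro allI impI)
        fix "is" js assume h: "set is \<subseteq> sdom I \<and> set js \<subseteq> sdom I \<and> same_qftp I is js"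
        then have "same_tp C (sub b is) (sub b js)" using b(2) unfolding indiscernible_def by blast
        then show "same_ctp C (sub b is) (sub b js)"
          using same_tp_ctp[OF ne G] sub_set[OF b(1)] h by blast
      qed
      moreover have "clocally_based C I b a"
        unfolding clocally_based_def
      proof (intro allI impI)
        fix \<Delta> :: "('f, 'r) cfm set" and js and e :: real assume h: "finite \<Delta> \<and> (\<forall>\<phi>\<in>\<Delta>. wf_cfm \<phi>) \<and> set js \<subseteq> sdom I \<and> e > 0"
        define F where "F \<phi> = snd (G \<phi>) (cval C (tup C (sub b js)) \<phi>)" for \<phi>
        have "\<exists>is. set is \<subseteq> sdom I \<and> same_qftp I is js \<and>
          (\<forall>\<psi>\<in>F ` \<Delta>. fv \<psi> \<subseteq> {..<length (sub b js)} \<longrightarrow>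
           (sat C (tup C (sub b js)) \<psi> \<longleftrightarrow> sat C (tup C (sub a is)) \<psi>))"
        proof -
          have "finite (F ` \<Delta>) \<and> set js \<subseteq> sdom I" using h by auto
          then show ?thesis using b(3) unfolding locally_based_def by blast
        qed
        then obtain "is" where isP: "set is \<subseteq> sdom I" "same_qftp I is js"
          "\<forall>\<psi>\<in>F ` \<Delta>. fv \<psi> \<subseteq> {..<length (sub b js)} \<longrightarrow>
           (sat C (tup C (sub b js)) \<psi> \<longleftrightarrow> sat C (tup C (sub a is)) \<psi>)" by blast
        have rb: "range (tup C (sub b js)) \<subseteq> sdom C"
          using tup_range[OF sub_set[OF b(1)] ne] h by blast
        have ra: "range (tup C (sub a is)) \<subseteq> sdom C"
          using tup_range[OF sub_set[OF a isP(1)] ne] .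
        show "\<exists>is. set is \<subseteq> sdom I \<and> same_qftp I is js \<and>
          (\<forall>\<phi>\<in>\<Delta>. cfv \<phi> \<subseteq> {..<length (sub b js)} \<longrightarrow>
             \<bar>cval C (tup C (sub b js)) \<phi> - cval C (tup C (sub a is)) \<phi>\<bar> \<le> e)"
        proof (intro exI conjI ballI impI)
          fix \<phi> assume \<phi>: "\<phi> \<in> \<Delta>" "cfv \<phi> \<subseteq> {..<length (sub b js)}"
          have g: "good C \<phi> (fst (G \<phi>)) (snd (G \<phi>))" using G h \<phi>(1) by blast
          have "fv (F \<phi>) \<subseteq> {..<length (sub b js)}" using g \<phi>(2) unfolding good_def F_def by blast
          moreover have "sat C (tup C (sub b js)) (F \<phi>)" using g rb unfolding good_def F_def by blast
          ultimately have "sat C (tup C (sub a is)) (F \<phi>)" using isP(3) \<phi>(1) by blast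
          then have "cval C (tup C (sub a is)) \<phi> = cval C (tup C (sub b js)) \<phi>"
            using g ra unfolding good_def F_def by blast
          then show "\<bar>cval C (tup C (sub b js)) \<phi> - cval C (tup C (sub a is)) \<phi>\<bar> \<le> e"
            using h by simp
        qed (use isP in auto)
      qed
      ultimately show "\<exists>b. indexed_seq C I m b \<and> cindiscernible C I b \<and> clocally_based C I b a"
        using b(1) by blast
    qed
  qed
qed

end
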